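(* Let $N\ge 1$ be an integer and $\lambda>0$, $\beta>0$, $\alpha>1$ real. For each positive divisor $m$ of $N$ put $c=N/m$, $$\mathbb{E}[T_{\text{job}}(m)]=\frac{\beta m\alpha}{m\alpha-1},\qquad a(m)=\lambda\,\mathbb{E}[T_{\text{job}}(m)],\qquad P_b(m)=\frac{a(m)^{N/m}/(N/m)!}{\sum_{j=0}^{N/m}a(m)^{j}/j!}.$$ (i) If $\alpha\ge 1.5$, then $P_b(m)$ is increasing in $m$ over the positive divisors $m$ of $N$, and hence attains its minimum at $m=1$ (i.e. $c=N$). (ii) If $\alpha<1.5$ and $N$ is even, then the minimum of $P_b(m)$ over the positive divisors $m$ of $N$ equals $\min\{P_b(1),P_b(2)\}$.
   Context: Model: an edge system has $N$ workers split into $c=N/m$ groups of $m$ workers (replication factor $m$, assumed to divide $N$). Jobs arrive as a Poisson process of rate $\lambda$; each job is replicated to the $m$ workers of a free group, and a job finding all groups busy is blocked. Each worker's service time is Pareto $\mathrm{Pareto}(\beta,\alpha)$ (scale $\beta$, tail index $\alpha>1$, i.e. $\Pr(X>x)=(\beta/x)^\alpha$ for $x\ge\beta$); the job-computing time (minimum of $m$ i.i.d. copies) is $\mathrm{Pareto}(\beta,m\alpha)$ with mean $\frac{\beta m\alpha}{m\alpha-1}$. The system is an M/G/c/c loss queue, so the job-blocking probability is the Erlang B formula $P_b(m)$ above. *)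

theory Defs
  imports Complex_Main
begin

text \<open>Mean job-computing time with replication factor m (Pareto(beta, m alpha) mean).\<close>
definition ET_job :: "real \<Rightarrow> real \<Rightarrow> nat \<Rightarrow> real" where
  "ET_job \<beta> \<alpha> m = \<beta> * real m * \<alpha> / (real m * \<alpha> - 1)"

definition load :: "real \<Rightarrow> real \<Rightarrow> real \<Rightarrow> nat \<Rightarrow> real" where
  "load lam \<beta> \<alpha> m = lam * ET_job \<beta> \<alpha> m"

definition erlangB :: "nat \<Rightarrow> real \<Rightarrow> real" where
  "erlangB c a = (a ^ c / fact c) / (\<Sum>j\<le>c. a ^ j / fact j)"

definition Pb :: "nat \<Rightarrow> real \<Rightarrow> real \<Rightarrow> real \<Rightarrow> nat \<Rightarrow> real" where
  "Pb N lam \<beta> \<alpha> m = erlangB (N div m) (load lam \<beta> \<alpha> m)"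

end

theory Submission
  imports Defs
begin

definition T :: "nat \<Rightarrow> real \<Rightarrow> real" where
  "T c a = (\<Sum>i\<le>c. \<Prod>t<i. (real c - real t) / a)"

lemma T_Suc: "T (Suc c) a = 1 + real (Suc c) / a * T c a"
proof -
  have "T (Suc c) a = (\<Sum>i\<le>Suc c. \<Prod>t<i. (real (Suc c) - real t) / a)" by (simp add: T_def)
  also have "\<dots> = 1 + (\<Sum>i\<le>c. \<Prod>t<Suc i. (real (Suc c) - real t) / a)"
    by (subst sum.atMost_Suc_shift) simp
  also have "(\<Sum>i\<le>c. \<Prod>t<Suc i. (real (Suc c) - real t) / a) = (\<Sum>i\<le>c. real (Suc c) / a * (\<Prod>t<i. (real c - real t) / a))"
    by (intro sum.cong refl, subst prod.lessThan_Suc_shift) simp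
  also have "\<dots> = real (Suc c) / a * T c a" by (simp add: T_def sum_distrib_left)
  finally show ?thesis .
qed

lemma E_T: "a > 0 \<Longrightarrow> (\<Sum>j\<le>c. a ^ j / fact j) = a ^ c / fact c * T c a"
proof (induction c)
  case 0 then show ?case by (simp add: T_def)
next
  case (Suc c)
  have "(\<Sum>j\<le>Suc c. a ^ j / fact j) = a ^ c / fact c * T c a + a ^ Suc c / fact (Suc c)"
    using Suc by simp
  also have "\<dots> = a ^ Suc c / fact (Suc c) * T (Suc c) a"
  proof -
    have k: "a ^ Suc c / fact (Suc c) * (real (Suc c) / a) = a ^ c / fact c"
    proof -
      have f: "(fact (Suc c) :: real) = real (Suc c) * fact c" by simp
      have p: "a ^ Suc c = a * a ^ c" by simp
      have "real (Suc c) * fact c > (0::real)" by simp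
      then show ?thesis unfolding f p using Suc.prems by (simp add: field_simps del: of_nat_Suc)
    qed
    have "a ^ Suc c / fact (Suc c) * T (Suc c) a = a ^ Suc c / fact (Suc c) + (a ^ Suc c / fact (Suc c) * (real (Suc c) / a)) * T c a"
      unfolding T_Suc by (simp only: distrib_left mult_1_right mult.assoc)
    then show ?thesis using k by simp
  qed
  finally show ?case .
qed

lemma erlangB_T: "a > 0 \<Longrightarrow> erlangB c a = 1 / T c a"
  using E_T[of a c] by (simp add: erlangB_def)


lemma factor_le:
  fixes a1 a2 :: real and c1 c2 t :: nat
  assumes "a1 > 0" "a2 > 0" "c2 \<le> c1" "real c2 * a1 \<le> real c1 * a2" "t < c2"
  shows "(real c2 - real t) / a2 \<le> (real c1 - real t) / a1"
proof -
  have c2: "real c2 > 0" using assms by simp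
  have "(real c2 - real t) * a1 = a1 * real c2 * (1 - real t / real c2)" using c2 by (simp add: field_simps)
  also have "\<dots> \<le> a2 * real c1 * (1 - real t / real c2)"
    using assms c2 by (intro mult_right_mono) (auto simp: field_simps)
  also have "\<dots> \<le> a2 * real c1 * (1 - real t / real c1)"
  proof -
    have "real t / real c1 \<le> real t / real c2" using assms c2 by (intro divide_left_mono) auto
    then show ?thesis using assms by (intro mult_left_mono) auto
  qed
  also have "\<dots> = (real c1 - real t) * a2" using assms c2 by (simp add: field_simps)
  finally show ?thesis using assms by (simp add: field_simps)
qed

lemma T_mono:
  fixes a1 a2 :: real and c1 c2 :: nat
  assumes "a1 > 0" "a2 > 0" "c2 \<le> c1" "real c2 * a1 \<le> real c1 * a2"
  shows "T c2 a2 \<le> T c1 a1" "T c2 a2 > 0"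
proof -
  have "T c2 a2 \<le> (\<Sum>i\<le>c2. \<Prod>t<i. (real c1 - real t) / a1)"
    unfolding T_def
  proof (intro sum_mono prod_mono conjI)
    fix i t assume "i \<in> {..c2}" "t \<in> {..<i}"
    then have "t < c2" by auto
    then show "0 \<le> (real c2 - real t) / a2" "(real c2 - real t) / a2 \<le> (real c1 - real t) / a1"
      using factor_le[OF assms] assms by auto
  qed
  also have "\<dots> \<le> T c1 a1" unfolding T_def
    using assms by (intro sum_mono2) (auto intro!: prod_nonneg)
  finally show "T c2 a2 \<le> T c1 a1" .
  have "T c2 a2 = 1 + (\<Sum>i\<in>{..c2}-{0}. \<Prod>t<i. (real c2 - real t) / a2)"
    unfolding T_def by (subst sum.remove[of _ 0]) auto
  also have "\<dots> \<ge> 1" using assms by (auto intro!: sum_nonneg prod_nonneg)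
  finally show "T c2 a2 > 0" by simp
qed

lemma erlangB_mono:
  fixes a1 a2 :: real and c1 c2 :: nat
  assumes "a1 > 0" "a2 > 0" "c2 \<le> c1" "real c2 * a1 \<le> real c1 * a2"
  shows "erlangB c1 a1 \<le> erlangB c2 a2"
  using T_mono[OF assms] assms by (simp add: erlangB_T frac_le)


lemma ma_gt1:
  assumes "\<alpha> > 1" "m > (0::nat)"
  shows "real m * \<alpha> > 1"
proof -
  have "real m \<ge> 1" using assms by simp
  then have "\<alpha> \<le> real m * \<alpha>" using assms mult_right_mono[of 1 "real m" \<alpha>] by simp
  then show ?thesis using assms by linarith
qed

lemma load_pos:
  assumes "lam > 0" "\<beta> > 0" "\<alpha> > 1" "m > 0"
  shows "load lam \<beta> \<alpha> m > 0"
proof -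
  have "real m * \<alpha> > 1" using ma_gt1[OF assms(3,4)] .
  then show ?thesis using assms unfolding load_def ET_job_def by (auto intro!: mult_pos_pos divide_pos_pos)
qed

lemma Pb_mono:
  fixes N m1 m2 :: nat and lam \<beta> \<alpha> :: real
  assumes "N \<ge> 1" "lam > 0" "\<beta> > 0" "\<alpha> > 1"
    and "0 < m1" "m1 dvd N" "0 < m2" "m2 dvd N" "m1 \<le> m2"
    and g: "(real m2 * \<alpha> - 1) * (real m1)^2 \<le> (real m1 * \<alpha> - 1) * (real m2)^2"
  shows "Pb N lam \<beta> \<alpha> m1 \<le> Pb N lam \<beta> \<alpha> m2"
  unfolding Pb_def
proof (rule erlangB_mono)
  show "load lam \<beta> \<alpha> m1 > 0" "load lam \<beta> \<alpha> m2 > 0" using load_pos assms by auto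
  show "N div m2 \<le> N div m1" using assms by (simp add: div_le_mono2)
  have r1: "real m1 * \<alpha> > 1" "real m2 * \<alpha> > 1" using ma_gt1[OF assms(4,5)] ma_gt1[OF assms(4,7)] by auto
  have nz: "real m1 * \<alpha> - 1 \<noteq> 0" "real m2 * \<alpha> - 1 \<noteq> 0" "real m1 \<noteq> 0" "real m2 \<noteq> 0" using r1 assms by auto
  define K where "K = real N * lam * \<beta> * \<alpha>"
  define D where "D = real m1 * real m2 * (real m1 * \<alpha> - 1) * (real m2 * \<alpha> - 1)"
  have K: "K > 0" unfolding K_def using assms by auto
  have D: "D > 0" unfolding D_def using assms r1 by auto
  have "real (N div m2) * load lam \<beta> \<alpha> m1 * D = K * ((real m2 * \<alpha> - 1) * (real m1)^2)"
    using assms nz unfolding K_def D_def load_def ET_job_def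
    by (simp add: real_of_nat_div field_simps power2_eq_square)
  then have e1: "real (N div m2) * load lam \<beta> \<alpha> m1 = K * ((real m2 * \<alpha> - 1) * (real m1)^2) / D"
    using D by (simp add: eq_divide_eq)
  have "real (N div m1) * load lam \<beta> \<alpha> m2 * D = K * ((real m1 * \<alpha> - 1) * (real m2)^2)"
    using assms nz unfolding K_def D_def load_def ET_job_def
    by (simp add: real_of_nat_div field_simps power2_eq_square)
  then have e2: "real (N div m1) * load lam \<beta> \<alpha> m2 = K * ((real m1 * \<alpha> - 1) * (real m2)^2) / D"
    using D by (simp add: eq_divide_eq)
  show "real (N div m2) * load lam \<beta> \<alpha> m1 \<le> real (N div m1) * load lam \<beta> \<alpha> m2"
    unfolding e1 e2 using K D g by (intro divide_right_mono mult_left_mono) auto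
qed

lemma g_cond:
  fixes m1 m2 :: nat and \<alpha> :: real
  assumes "1 \<le> m1" "m1 \<le> m2" "\<alpha> > 1" "\<alpha> \<ge> 3/2 \<or> m1 \<ge> 2"
  shows "(real m2 * \<alpha> - 1) * (real m1)^2 \<le> (real m1 * \<alpha> - 1) * (real m2)^2"
proof (cases "m1 = m2")
  case True then show ?thesis by simp
next
  case False
  define x where "x = real m1"
  define y where "y = real m2"
  have xy: "1 \<le> x" "x < y" using assms False unfolding x_def y_def by auto
  have key: "\<alpha> * x * y \<ge> x + y"
  proof (cases "m1 \<ge> 2")
    case True
    then have "x \<ge> 2" unfolding x_def by simp
    then have "(x - 1) * (y - 1) \<ge> 1 * 1" using xy
      by (intro mult_mono) auto
    then have "x * y \<ge> x + y" by (simp add: algebra_simps)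
    moreover have "\<alpha> * x * y \<ge> x * y" using xy assms by (simp add: mult.assoc)
    ultimately show ?thesis by linarith
  next
    case False
    then have "x = 1" "\<alpha> \<ge> 3/2" using assms unfolding x_def by auto
    moreover have "m2 \<ge> 2" using xy \<open>x = 1\<close> unfolding x_def y_def by linarith
    then have "y \<ge> 2" unfolding y_def by simp
    ultimately have "\<alpha> * y \<ge> 3/2 * y" by (simp add: mult_right_mono)
    moreover have "\<alpha> * x * y = \<alpha> * y" using \<open>x = 1\<close> by simp
    ultimately show ?thesis using \<open>x = 1\<close> \<open>y \<ge> 2\<close> by linarith
  qed
  have "(x * \<alpha> - 1) * y^2 - (y * \<alpha> - 1) * x^2 = (y - x) * (\<alpha> * x * y - x - y)"
    by (simp add: algebra_simps power2_eq_square)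
  also have "\<dots> \<ge> 0" using xy key by (intro mult_nonneg_nonneg) auto
  finally show ?thesis unfolding x_def y_def by simp
qed

theorem lemma1:
  fixes N :: nat and lam \<beta> \<alpha> :: real
  assumes "N \<ge> 1" and "lam > 0" and "\<beta> > 0" and "\<alpha> > 1"
  shows "(\<alpha> \<ge> 3/2 \<longrightarrow>
            (\<forall>m1 m2. 0 < m1 \<and> m1 dvd N \<and> 0 < m2 \<and> m2 dvd N \<and> m1 \<le> m2 \<longrightarrow>
                Pb N lam \<beta> \<alpha> m1 \<le> Pb N lam \<beta> \<alpha> m2)
            \<and> Pb N lam \<beta> \<alpha> 1 = Min (Pb N lam \<beta> \<alpha> ` {m. 0 < m \<and> m dvd N}))
       \<and> (\<alpha> < 3/2 \<and> even N \<longrightarrow>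
            Min (Pb N lam \<beta> \<alpha> ` {m. 0 < m \<and> m dvd N}) = min (Pb N lam \<beta> \<alpha> 1) (Pb N lam \<beta> \<alpha> 2))"
proof -
  let ?S = "{m. 0 < m \<and> m dvd N}"
  have fin: "finite (Pb N lam \<beta> \<alpha> ` ?S)"
  proof -
    have "?S \<subseteq> {..N}" using assms(1) by (auto dest: dvd_imp_le)
    then show ?thesis by (meson finite_atMost finite_imageI finite_subset)
  qed
  have mono: "Pb N lam \<beta> \<alpha> m1 \<le> Pb N lam \<beta> \<alpha> m2"
    if "0 < m1" "m1 dvd N" "0 < m2" "m2 dvd N" "m1 \<le> m2" "\<alpha> \<ge> 3/2 \<or> m1 \<ge> 2" for m1 m2
    using that assms by (intro Pb_mono g_cond) auto
  have part1: "\<alpha> \<ge> 3/2 \<longrightarrow>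
            (\<forall>m1 m2. 0 < m1 \<and> m1 dvd N \<and> 0 < m2 \<and> m2 dvd N \<and> m1 \<le> m2 \<longrightarrow>
                Pb N lam \<beta> \<alpha> m1 \<le> Pb N lam \<beta> \<alpha> m2)
            \<and> Pb N lam \<beta> \<alpha> 1 = Min (Pb N lam \<beta> \<alpha> ` ?S)"
  proof (intro impI conjI)
    assume a: "\<alpha> \<ge> 3/2"
    show "\<forall>m1 m2. 0 < m1 \<and> m1 dvd N \<and> 0 < m2 \<and> m2 dvd N \<and> m1 \<le> m2 \<longrightarrow>
                Pb N lam \<beta> \<alpha> m1 \<le> Pb N lam \<beta> \<alpha> m2"
      using mono a by blast
    show "Pb N lam \<beta> \<alpha> 1 = Min (Pb N lam \<beta> \<alpha> ` ?S)"
    proof -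
      have "Min (Pb N lam \<beta> \<alpha> ` ?S) = Pb N lam \<beta> \<alpha> 1"
        by (rule Min_eqI[OF fin]) (use mono a in auto)
      then show ?thesis by simp
    qed
  qed
  have part2: "\<alpha> < 3/2 \<and> even N \<longrightarrow>
            Min (Pb N lam \<beta> \<alpha> ` ?S) = min (Pb N lam \<beta> \<alpha> 1) (Pb N lam \<beta> \<alpha> 2)"
  proof
    assume a: "\<alpha> < 3/2 \<and> even N"
    have in2: "Pb N lam \<beta> \<alpha> 2 \<in> Pb N lam \<beta> \<alpha> ` ?S" using a by auto
    have in1: "Pb N lam \<beta> \<alpha> 1 \<in> Pb N lam \<beta> \<alpha> ` ?S" by auto
    show "Min (Pb N lam \<beta> \<alpha> ` ?S) = min (Pb N lam \<beta> \<alpha> 1) (Pb N lam \<beta> \<alpha> 2)"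
    proof (rule Min_eqI[OF fin])
      fix y assume "y \<in> Pb N lam \<beta> \<alpha> ` ?S"
      then obtain m where m: "0 < m" "m dvd N" "y = Pb N lam \<beta> \<alpha> m" by auto
      show "min (Pb N lam \<beta> \<alpha> 1) (Pb N lam \<beta> \<alpha> 2) \<le> y"
      proof (cases "m = 1")
        case True then show ?thesis using m by simp
      next
        case False
        then have "m \<ge> 2" using m by simp
        then have "Pb N lam \<beta> \<alpha> 2 \<le> y" using mono[of 2 m] m a by auto
        then show ?thesis by simp
      qed
    next
      show "min (Pb N lam \<beta> \<alpha> 1) (Pb N lam \<beta> \<alpha> 2) \<in> Pb N lam \<beta> \<alpha> ` ?S"
        using in1 in2 by (simp add: min_def)
    qed
  qed
  show ?thesis using part1 part2 by blast
qed

end
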